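(* Let $n\ge 5$, $q>5$, and let $u\in C^{6}(\mathbb{R}^{n})$, $u>0$, be a radially symmetric solution of $\Delta^{3}u=u^{-q}$ in $\mathbb{R}^{n}$ such that $\liminf_{|x|\to+\infty}u(x)/|x|\in(0,+\infty]$ and $\lim_{r\to+\infty}u''(r)=\rho\in\mathbb{R}$ exists. Then $\rho\ge 0$. If $\rho>0$, then $\lim_{|x|\to+\infty}u(x)/|x|^{2}=\rho/2$. If $\rho=0$, then $$\lim_{|x|\to+\infty}\frac{u(x)}{|x|}=-\frac{1}{n-1}\int_{0}^{+\infty}t^{2}\Big(\Delta^{2}\bar u(t)-\frac{n-3}{t}(\Delta\bar u)'(t)\Big)dt\in(0,+\infty).$$
   Context: $u(r)$ denotes $u(x)$ with $r=|x|$; $\bar u(r)$ is the spherical average of $u$ over $\partial B_r(0)$ (equal to $u(r)$ here), and $\Delta\bar u$, $\Delta^{2}\bar u$ are the radial Laplacians, $\Delta f(r)=r^{1-n}(r^{n-1}f'(r))'$. *)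

theory Defs
  imports "HOL-Analysis.Analysis"
begin

fun Ck :: "nat \<Rightarrow> ('a::euclidean_space \<Rightarrow> real) \<Rightarrow> bool" where
  "Ck 0 f = continuous_on UNIV f"
| "Ck (Suc k) f = (f differentiable_on UNIV \<and>
      (\<forall>i\<in>Basis. Ck k (\<lambda>x. frechet_derivative f (at x) i)))"

definition partial :: "('a::euclidean_space \<Rightarrow> real) \<Rightarrow> 'a \<Rightarrow> 'a \<Rightarrow> real" where
  "partial f i x = frechet_derivative f (at x) i"

definition laplacian :: "('a::euclidean_space \<Rightarrow> real) \<Rightarrow> 'a \<Rightarrow> real" where
  "laplacian f x = (\<Sum>i\<in>Basis. partial (partial f i) i x)"

definition radial_profile :: "('a::euclidean_space \<Rightarrow> real) \<Rightarrow> real \<Rightarrow> real" where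
  "radial_profile u r = u (r *\<^sub>R (SOME b. b \<in> (Basis::'a set)))"

definition radial_lap :: "nat \<Rightarrow> (real \<Rightarrow> real) \<Rightarrow> real \<Rightarrow> real" where
  "radial_lap n f r = r powr (1 - real n) * deriv (\<lambda>s. s ^ (n - 1) * deriv f s) r"

end

theory Submission
  imports Defs
begin


lemma lhopital_at_top_0:
  fixes f g :: "real \<Rightarrow> real"
  assumes f0: "(f \<longlongrightarrow> 0) at_top" and g0: "(g \<longlongrightarrow> 0) at_top"
    and gnz: "eventually (\<lambda>x. g x \<noteq> 0) at_top"
    and g': "eventually (\<lambda>x. g' x \<noteq> 0) at_top"
    and Df: "eventually (\<lambda>x. DERIV f x :> f' x) at_top"
    and Dg: "eventually (\<lambda>x. DERIV g x :> g' x) at_top"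
    and lim: "((\<lambda> x. (f' x / g' x)) \<longlongrightarrow> y) at_top"
  shows "((\<lambda> x. f x / g x) \<longlongrightarrow> y) at_top"
  unfolding filterlim_at_top_to_right
proof (rule lhopital_right_0)
  let ?F = "\<lambda>x. f (inverse x)"
  let ?G = "\<lambda>x. g (inverse x)"
  let ?R = "at_right (0::real)"
  let ?D = "\<lambda>f' x. f' (inverse x) * - (inverse x ^ Suc (Suc 0))"
  show "(?F \<longlongrightarrow> 0) ?R" using f0 unfolding filterlim_at_top_to_right .
  show "(?G \<longlongrightarrow> 0) ?R" using g0 unfolding filterlim_at_top_to_right .
  show "eventually (\<lambda>x. ?G x \<noteq> 0) ?R"
    unfolding eventually_at_right_to_top using gnz by simp
  show "eventually (\<lambda>x. DERIV ?G x  :> ?D g' x) ?R"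
    unfolding eventually_at_right_to_top
    using Dg eventually_ge_at_top[where c=1]
    by eventually_elim (rule derivative_eq_intros DERIV_chain'[where f=inverse] | simp)+
  show "eventually (\<lambda>x. DERIV ?F x  :> ?D f' x) ?R"
    unfolding eventually_at_right_to_top
    using Df eventually_ge_at_top[where c=1]
    by eventually_elim (rule derivative_eq_intros DERIV_chain'[where f=inverse] | simp)+
  show "eventually (\<lambda>x. ?D g' x \<noteq> 0) ?R"
    unfolding eventually_at_right_to_top
    using g' eventually_ge_at_top[where c=1]
    by eventually_elim auto
  show "((\<lambda>x. ?D f' x / ?D g' x) \<longlongrightarrow> y) ?R"
    unfolding filterlim_at_right_to_top
    apply (intro filterlim_cong[THEN iffD2, OF refl refl _ lim])
    using eventually_ge_at_top[where c=1]
    by eventually_elim simp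
qed

lemma decr_bdd_conv:
  fixes \<psi> :: "real \<Rightarrow> real"
  assumes dec: "\<And>r s. R \<le> r \<Longrightarrow> r \<le> s \<Longrightarrow> \<psi> s \<le> \<psi> r"
    and bdd: "\<And>r. R \<le> r \<Longrightarrow> B \<le> \<psi> r"
  shows "\<exists>L. (\<psi> \<longlongrightarrow> L) at_top"
proof -
  define L where "L = Inf (\<psi> ` {R..})"
  have bb: "bdd_below (\<psi> ` {R..})" using bdd by (auto intro!: bdd_belowI)
  have ne: "\<psi> ` {R..} \<noteq> {}" by auto
  have "(\<psi> \<longlongrightarrow> L) at_top"
  proof (rule decreasing_tendsto)
    show "eventually (\<lambda>n. L \<le> \<psi> n) at_top"
      using eventually_ge_at_top[of R]
      by eventually_elim (auto simp: L_def intro!: cInf_lower bb)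
    fix x assume "L < x"
    then obtain s where s: "s \<ge> R" "\<psi> s < x"
      unfolding L_def using cInf_less_iff[OF ne bb] by auto
    show "eventually (\<lambda>n. \<psi> n < x) at_top"
      using eventually_ge_at_top[of s]
      by eventually_elim (use s dec in force)
  qed
  then show ?thesis by blast
qed

lemma incr_bdd_conv:
  fixes \<psi> :: "real \<Rightarrow> real"
  assumes inc: "\<And>r s. R \<le> r \<Longrightarrow> r \<le> s \<Longrightarrow> \<psi> r \<le> \<psi> s"
    and bdd: "\<And>r. R \<le> r \<Longrightarrow> \<psi> r \<le> B"
  shows "\<exists>L. (\<psi> \<longlongrightarrow> L) at_top"
proof -
  have "\<exists>L. ((\<lambda>r. - \<psi> r) \<longlongrightarrow> L) at_top"
    by (rule decr_bdd_conv[of R _ "-B"]) (use inc bdd in force)+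
  then obtain L where "((\<lambda>r. - \<psi> r) \<longlongrightarrow> L) at_top" by blast
  then have "((\<lambda>r. - (- \<psi> r)) \<longlongrightarrow> - L) at_top" by (intro tendsto_intros)
  then show ?thesis by auto
qed

lemma conv_bdd_deriv:
  fixes \<phi> \<phi>' :: "real \<Rightarrow> real"
  assumes R: "R > 0" and d: "\<And>r. r \<ge> R \<Longrightarrow> DERIV \<phi> r :> \<phi>' r"
    and b: "\<And>r. r \<ge> R \<Longrightarrow> \<bar>\<phi>' r\<bar> \<le> M / r^2"
  shows "\<exists>L. (\<phi> \<longlongrightarrow> L) at_top"
proof -
  define \<psi> where "\<psi> r = \<phi> r + M / r" for r
  define ch where "ch r = \<phi> r - M / r" for r
  have dpsi: "DERIV \<psi> r :> \<phi>' r - M / r^2" if "r \<ge> R" for r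
    unfolding \<psi>_def using that R
    by (auto intro!: derivative_eq_intros d simp: power2_eq_square field_simps)
  have dchi: "DERIV ch r :> \<phi>' r + M / r^2" if "r \<ge> R" for r
    unfolding ch_def using that R
    by (auto intro!: derivative_eq_intros d simp: power2_eq_square field_simps)
  have dec: "\<psi> s \<le> \<psi> r" if "R \<le> r" "r \<le> s" for r s
  proof (rule DERIV_nonpos_imp_nonincreasing[OF that(2)])
    fix x assume "r \<le> x" "x \<le> s"
    then have "R \<le> x" using that by simp
    then show "\<exists>y. DERIV \<psi> x :> y \<and> y \<le> 0"
    proof (intro exI conjI)
      show "DERIV \<psi> x :> \<phi>' x - M / x^2" using dpsi \<open>R \<le> x\<close> by blast
      have "\<bar>\<phi>' x\<bar> \<le> M / x^2" using b \<open>R \<le> x\<close> by blast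
      then show "\<phi>' x - M / x^2 \<le> 0" by linarith
    qed
  qed
  have inc: "ch r \<le> ch s" if "R \<le> r" "r \<le> s" for r s
  proof (rule DERIV_nonneg_imp_nondecreasing[OF that(2)])
    fix x assume "r \<le> x" "x \<le> s"
    then have "R \<le> x" using that by simp
    then show "\<exists>y. DERIV ch x :> y \<and> y \<ge> 0"
    proof (intro exI conjI)
      show "DERIV ch x :> \<phi>' x + M / x^2" using dchi \<open>R \<le> x\<close> by blast
      have "\<bar>\<phi>' x\<bar> \<le> M / x^2" using b \<open>R \<le> x\<close> by blast
      then show "\<phi>' x + M / x^2 \<ge> 0" by linarith
    qed
  qed
  have bdd: "ch R \<le> \<psi> r" if "R \<le> r" for r
  proof -
    have "0 \<le> M / R^2" using b[of R] by (meson abs_ge_zero order_trans order_refl)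
    then have "M \<ge> 0" using R by (simp add: zero_le_divide_iff)
    then have "ch r \<le> \<psi> r" unfolding ch_def \<psi>_def using that R by (simp add: divide_nonneg_pos)
    then show ?thesis using inc[of R r] that by simp
  qed
  obtain L where L: "(\<psi> \<longlongrightarrow> L) at_top" using decr_bdd_conv[of R \<psi> "ch R"] dec bdd by blast
  have "((\<lambda>r. \<psi> r - M / r) \<longlongrightarrow> L - 0) at_top"
    by (intro tendsto_intros L tendsto_divide_0[OF tendsto_const] filterlim_at_top_imp_at_infinity filterlim_ident)
  then show ?thesis unfolding \<psi>_def by auto
qed

lemma lh_pow:
  fixes F D G :: "real \<Rightarrow> real"
  assumes d: "eventually (\<lambda>r. DERIV F r :> D r) at_top"
    and e: "eventually (\<lambda>r. D r = real (Suc j) * r^j * G r) at_top"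
    and G: "(G \<longlongrightarrow> y) at_top"
  shows "((\<lambda>r. F r / r^Suc j) \<longlongrightarrow> y) at_top"
proof (rule lhospital_at_top_at_top[where g' = "\<lambda>r. real (Suc j) * r^j" and f' = D])
  show "LIM x at_top. (x::real) ^ Suc j :> at_top"
    by (rule filterlim_pow_at_top[OF _ filterlim_ident]) auto
  show "\<forall>\<^sub>F x::real in at_top. real (Suc j) * x ^ j \<noteq> 0"
    using eventually_gt_at_top[of 0] by eventually_elim auto
  show "\<forall>\<^sub>F x in at_top. DERIV F x :> D x" by (rule d)
  show "\<forall>\<^sub>F x in at_top. ((\<lambda>x. x ^ Suc j) has_real_derivative real (Suc j) * x ^ j) (at x)"
    by (intro always_eventually allI) (use DERIV_pow[of "Suc j"] in simp)
  show "((\<lambda>x. D x / (real (Suc j) * x ^ j)) \<longlongrightarrow> y) at_top"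
  proof (rule Lim_transform_eventually[OF G])
    show "\<forall>\<^sub>F x in at_top. G x = D x / (real (Suc j) * x ^ j)"
      using e eventually_gt_at_top[of 0] by eventually_elim auto
  qed
qed

lemma lh_inv:
  fixes F D G :: "real \<Rightarrow> real"
  assumes F0: "(F \<longlongrightarrow> 0) at_top"
    and d: "eventually (\<lambda>r. DERIV F r :> D r) at_top"
    and e: "eventually (\<lambda>r. D r = G r / r^(Suc (Suc j))) at_top"
    and G: "(G \<longlongrightarrow> y) at_top"
  shows "((\<lambda>r. r^(Suc j) * F r) \<longlongrightarrow> - y / real (Suc j)) at_top"
proof -
  have "((\<lambda>r. F r / (1 / r^(Suc j))) \<longlongrightarrow> - y / real (Suc j)) at_top"
  proof (rule lhopital_at_top_0[where g' = "\<lambda>r. - real (Suc j) / r^(Suc (Suc j))" and f' = D])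
    show "(F \<longlongrightarrow> 0) at_top" by (rule F0)
    show "((\<lambda>x::real. 1 / x ^ Suc j) \<longlongrightarrow> 0) at_top"
      by (intro tendsto_divide_0[OF tendsto_const] filterlim_at_top_imp_at_infinity
            filterlim_pow_at_top[OF _ filterlim_ident]) auto
    show "\<forall>\<^sub>F x::real in at_top. 1 / x ^ Suc j \<noteq> 0"
      using eventually_gt_at_top[of 0] by eventually_elim auto
    show "\<forall>\<^sub>F x::real in at_top. - real (Suc j) / x ^ Suc (Suc j) \<noteq> 0"
      using eventually_gt_at_top[of 0] by eventually_elim auto
    show "\<forall>\<^sub>F x in at_top. DERIV F x :> D x" by (rule d)
    show "\<forall>\<^sub>F x in at_top. ((\<lambda>x::real. 1 / x ^ Suc j) has_real_derivative - real (Suc j) / x ^ Suc (Suc j)) (at x)"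
      using eventually_gt_at_top[of 0]
    proof eventually_elim
      case (elim x)
      have p: "DERIV (\<lambda>x. x^Suc j) x :> real (Suc j) * x^j" using DERIV_pow[of "Suc j" x] by simp
      have d: "DERIV (\<lambda>x. inverse (x^Suc j)) x :> - (real (Suc j) * x ^ j * inverse ((x ^ Suc j)^Suc (Suc 0)))"
        by (rule DERIV_inverse_fun[OF p]) (use elim in simp)
      have e: "- (real (Suc j) * x ^ j * inverse ((x ^ Suc j)^Suc (Suc 0))) = - real (Suc j) / x ^ Suc (Suc j)"
        using elim by (simp add: divide_simps)
      have "(\<lambda>x::real. 1 / x ^ Suc j) = (\<lambda>x. inverse (x^Suc j))" by (simp add: divide_inverse)
      then show ?case using d e by simp
    qed
    have "((\<lambda>x. - G x / real (Suc j)) \<longlongrightarrow> - y / real (Suc j)) at_top"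
      by (intro tendsto_intros G) auto
    then show "((\<lambda>x. D x / (- real (Suc j) / x ^ Suc (Suc j))) \<longlongrightarrow> - y / real (Suc j)) at_top"
      by (rule Lim_transform_eventually)
        (use e eventually_gt_at_top[of 0] in \<open>eventually_elim, auto simp: field_simps\<close>)
  qed
  then show ?thesis
    by (rule Lim_transform_eventually)
      (use eventually_gt_at_top[of 0] in \<open>eventually_elim, auto simp: field_simps\<close>)
qed

lemma pow_powr: "(r::real) > 0 \<Longrightarrow> r^k * r powr a = r powr (real k + a)"
  by (simp add: powr_add powr_realpow)

lemma ev_pos: "(\<And>r::real. r > 0 \<Longrightarrow> P r) \<Longrightarrow> eventually P at_top"
  using eventually_gt_at_top[of 0] eventually_mono by blast

lemma ode_main:
  fixes f f1 f2 v v1 v2 w w1 w2 :: "real \<Rightarrow> real" and m :: nat and q c R0 :: real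
  assumes q5: "q > 5" and c: "c > 0" and R0: "R0 > 0"
  and df: "\<And>r. r > 0 \<Longrightarrow> (f has_real_derivative f1 r) (at r)"
  and df1: "\<And>r. r > 0 \<Longrightarrow> (f1 has_real_derivative f2 r) (at r)"
  and dv: "\<And>r. r > 0 \<Longrightarrow> (v has_real_derivative v1 r) (at r)"
  and dv1: "\<And>r. r > 0 \<Longrightarrow> (v1 has_real_derivative v2 r) (at r)"
  and dw: "\<And>r. r > 0 \<Longrightarrow> (w has_real_derivative w1 r) (at r)"
  and dw1: "\<And>r. r > 0 \<Longrightarrow> (w1 has_real_derivative w2 r) (at r)"
  and ev: "\<And>r. r > 0 \<Longrightarrow> v r = f2 r + (real m + 4) * f1 r / r"
  and ew: "\<And>r. r > 0 \<Longrightarrow> w r = v2 r + (real m + 4) * v1 r / r"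
  and eq: "\<And>r. r > 0 \<Longrightarrow> w2 r + (real m + 4) * w1 r / r = f r powr (-q)"
  and grow: "\<And>r. r \<ge> R0 \<Longrightarrow> c * r \<le> f r"
  and f2lim: "(f2 \<longlongrightarrow> 0) at_top"
  shows "\<exists>I. ((\<lambda>r. r^2 * v1 r) \<longlongrightarrow> I) at_top \<and> ((\<lambda>r. f r / r) \<longlongrightarrow> - I / (real m + 4)) at_top"
proof -
  let ?a = "real m + 4"
  have ev0: "eventually (\<lambda>r. r > (0::real)) at_top" by (rule eventually_gt_at_top)
  have dgen: "DERIV (\<lambda>r. r^(m+4) * h r) r :> r^(m+4) * (h' r + ?a * h r / r)"
    if "r > 0" "DERIV h r :> h' r" for h h' :: "real \<Rightarrow> real" and r :: real
  proof -
    have "DERIV (\<lambda>r. r^(m+4) * h r) r :> real (m+4) * r^(m+4-1) * h r + r^(m+4) * h' r"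
      by (rule derivative_eq_intros that(2) refl)+ simp
    moreover have "real (m+4) * r^(m+4-1) * h r + r^(m+4) * h' r = r^(m+4) * (h' r + ?a * h r / r)"
    proof -
      have "r^(m+4) = r * r^(m+3)" by (simp add: numeral_eq_Suc)
      then show ?thesis using that(1) by (simp add: field_simps)
    qed
    ultimately show ?thesis by simp
  qed
  have S1: "((\<lambda>r. f1 r / r^Suc 0) \<longlongrightarrow> 0) at_top"
    by (rule lh_pow[where D = f2 and G = f2]) (auto intro!: ev_pos df1 f2lim)
  have S2: "(v \<longlongrightarrow> 0) at_top"
  proof -
    have "((\<lambda>r. f2 r + ?a * (f1 r / r^Suc 0)) \<longlongrightarrow> 0 + ?a * 0) at_top"
      by (intro tendsto_intros f2lim S1)
    then have "((\<lambda>r. f2 r + ?a * (f1 r / r^Suc 0)) \<longlongrightarrow> 0) at_top" by simp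
    then show ?thesis
      by (rule Lim_transform_eventually) (rule ev_pos, simp add: ev)
  qed
  define W where "W r = r^(m+4) * w1 r" for r
  have dW: "DERIV W r :> r^(m+4) * f r powr (-q)" if "r > 0" for r
    unfolding W_def using dgen[where h=w1 and h'=w2, OF that dw1[OF that]] eq[OF that] by simp
  define R1 where "R1 = max R0 1"
  have R1: "R1 \<ge> 1" "R1 \<ge> R0" "R1 > 0" unfolding R1_def by auto
  define C where "C = c powr (-q)"
  have fpos: "f r > 0" if "r \<ge> R1" for r
    using grow[of r] that R1 c by (smt (verit) mult_pos_pos)
  have fq: "f r powr (-q) \<le> C * r powr (-q)" if "r \<ge> R1" for r
  proof -
    have "f r powr (-q) \<le> (c * r) powr (-q)"
      by (rule powr_mono2') (use q5 grow[of r] that R1 c in auto)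
    also have "\<dots> = C * r powr (-q)" unfolding C_def using c that R1 by (simp add: powr_mult)
    finally show ?thesis .
  qed
  have r4: "r^(m+4) * f r powr (-q) \<le> C * r^m * r powr (4 - q)" if "r \<ge> R1" for r
  proof -
    have "r^(m+4) * f r powr (-q) \<le> r^(m+4) * (C * r powr (-q))"
      by (rule mult_left_mono[OF fq[OF that]]) (use that R1 in simp)
    also have "\<dots> = C * r^m * (r^4 * r powr (-q))" by (simp add: power_add)
    also have "r^4 * r powr (-q) = r powr (4 - q)"
      using that R1 pow_powr[of r 4 "-q"] by simp
    finally show ?thesis by simp
  qed
  have KW: "\<exists>K. ((\<lambda>r. W r / r^m) \<longlongrightarrow> K) at_top"
  proof (cases m)
    case 0
    define \<Phi> where "\<Phi> r = W r + (C / (q - 5)) * r powr (5 - q)" for r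
    have dPhi: "DERIV \<Phi> r :> r^(m+4) * f r powr (-q) - C * r powr (4 - q)"
      if "r > 0" for r
    proof -
      have "DERIV \<Phi> r :> r^(m+4) * f r powr (-q) + (C / (q - 5)) * ((5 - q) * r powr (5 - q - 1))"
        unfolding \<Phi>_def by (intro DERIV_add DERIV_cmult dW has_real_derivative_powr that)
      moreover have "(C / (q - 5)) * ((5 - q) * r powr (5 - q - 1)) = - (C * r powr (4 - q))"
        using q5 by (simp add: field_simps)
      ultimately show ?thesis by simp
    qed
    have inc: "W r \<le> W s" if "R1 \<le> r" "r \<le> s" for r s
    proof (rule DERIV_nonneg_imp_nondecreasing[OF that(2)])
      fix x assume "r \<le> x" "x \<le> s"
      then show "\<exists>y. DERIV W x :> y \<and> y \<ge> 0"
        using dW[of x] that R1 by (intro exI[of _ "x^(m+4) * f x powr (-q)"]) auto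
    qed
    have dec: "\<Phi> s \<le> \<Phi> r" if "R1 \<le> r" "r \<le> s" for r s
    proof (rule DERIV_nonpos_imp_nonincreasing[OF that(2)])
      fix x assume x: "r \<le> x" "x \<le> s"
      then have x1: "x \<ge> R1" using that by simp
      have "x^(m+4) * f x powr (-q) \<le> C * x powr (4 - q)"
        using r4[OF x1] 0 by simp
      then show "\<exists>y. DERIV \<Phi> x :> y \<and> y \<le> 0"
        using dPhi[of x] x1 R1 by (intro exI[of _ "x^(m+4) * f x powr (-q) - C * x powr (4 - q)"]) auto
    qed
    have bdd: "W r \<le> \<Phi> R1" if "R1 \<le> r" for r
    proof -
      have "0 \<le> (C / (q - 5)) * r powr (5 - q)" using q5 unfolding C_def by simp
      then have "W r \<le> \<Phi> r" unfolding \<Phi>_def by simp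
      also have "\<dots> \<le> \<Phi> R1" using dec[of R1 r] that by simp
      finally show ?thesis .
    qed
    obtain K where "(W \<longlongrightarrow> K) at_top" using incr_bdd_conv[of R1 W "\<Phi> R1"] inc bdd by blast
    then show ?thesis using 0 by auto
  next
    case (Suc k)
    have "((\<lambda>r. W r / r^Suc k) \<longlongrightarrow> 0) at_top"
    proof (rule lh_pow[where D = "\<lambda>r. r^(m+4) * f r powr (-q)" and G = "\<lambda>r. r^5 * f r powr (-q) / real (Suc k)"])
      show "\<forall>\<^sub>F r in at_top. DERIV W r :> r^(m+4) * f r powr (-q)" by (rule ev_pos) (rule dW)
      show "\<forall>\<^sub>F r in at_top. r^(m+4) * f r powr (-q) = real (Suc k) * r^k * (r^5 * f r powr (-q) / real (Suc k))"
        by (rule ev_pos) (simp add: Suc power_add)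
      show "((\<lambda>r. r^5 * f r powr (-q) / real (Suc k)) \<longlongrightarrow> 0) at_top"
      proof (rule tendsto_sandwich[where f = "\<lambda>_. 0" and h = "\<lambda>r. C * r powr (5 - q) / real (Suc k)"])
        show "\<forall>\<^sub>F r in at_top. 0 \<le> r^5 * f r powr (-q) / real (Suc k)"
          by (rule ev_pos) simp
        show "\<forall>\<^sub>F r in at_top. r^5 * f r powr (-q) / real (Suc k) \<le> C * r powr (5 - q) / real (Suc k)"
          using eventually_ge_at_top[of R1]
        proof eventually_elim
          case (elim r)
          have "r^5 * f r powr (-q) \<le> r^5 * (C * r powr (-q))"
            by (rule mult_left_mono[OF fq[OF elim]]) (use elim R1 in simp)
          also have "r^5 * (C * r powr (-q)) = C * r powr (5 - q)"
            using elim R1 pow_powr[of r 5 "-q"] by simp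
          finally show ?case by (simp add: divide_right_mono)
        qed
        show "((\<lambda>_. 0) \<longlongrightarrow> (0::real)) at_top" by simp
        have "((\<lambda>r. C * r powr (5 - q) / real (Suc k)) \<longlongrightarrow> C * 0 / real (Suc k)) at_top"
          by (intro tendsto_intros tendsto_neg_powr filterlim_ident) (use q5 in auto)
        then show "((\<lambda>r. C * r powr (5 - q) / real (Suc k)) \<longlongrightarrow> 0) at_top" by simp
      qed
    qed
    then show ?thesis using Suc by auto
  qed
  then obtain K where K: "((\<lambda>r. W r / r^m) \<longlongrightarrow> K) at_top" by blast
  have w1W: "w1 r = (W r / r^m) / r^4" if "r > 0" for r
    unfolding W_def using that by (simp add: power_add)
  obtain N where N: "\<And>r. r \<ge> N \<Longrightarrow> \<bar>W r / r^m - K\<bar> < 1"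
    using tendstoD[OF K, of 1] unfolding eventually_at_top_linorder dist_real_def by auto
  define R2 where "R2 = max N 1"
  obtain L where L: "(w \<longlongrightarrow> L) at_top"
  proof -
    have "\<exists>L. (w \<longlongrightarrow> L) at_top"
    proof (rule conv_bdd_deriv[of R2 w w1 "\<bar>K\<bar> + 1"])
      show "R2 > 0" unfolding R2_def by simp
      fix r assume r: "r \<ge> R2"
      then have r1: "r \<ge> 1" "r \<ge> N" unfolding R2_def by auto
      show "DERIV w r :> w1 r" using dw r1 by simp
      have "\<bar>w1 r\<bar> = \<bar>W r / r^m\<bar> / r^4" using w1W[of r] r1 by simp
      also have "\<dots> \<le> (\<bar>K\<bar> + 1) / r^4"
        using N[OF r1(2)] r1 by (intro divide_right_mono) auto
      also have "\<dots> \<le> (\<bar>K\<bar> + 1) / r^2"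
        using r1 by (intro divide_left_mono) (auto simp: power_increasing)
      finally show "\<bar>w1 r\<bar> \<le> (\<bar>K\<bar> + 1) / r^2" .
    qed
    then show ?thesis using that by blast
  qed
  define V where "V r = r^(m+4) * v1 r" for r
  have dV: "DERIV V r :> r^(m+4) * w r" if "r > 0" for r
    unfolding V_def using dgen[where h=v1 and h'=v2, OF that dv1[OF that]] ew[OF that] by simp
  have S6a: "((\<lambda>r. V r / r^Suc (m+4)) \<longlongrightarrow> L / (real m + 5)) at_top"
  proof (rule lh_pow[where D = "\<lambda>r. r^(m+4) * w r" and G = "\<lambda>r. w r / (real m + 5)"])
    show "\<forall>\<^sub>F r in at_top. DERIV V r :> r^(m+4) * w r" by (rule ev_pos) (rule dV)
    show "\<forall>\<^sub>F r in at_top. r^(m+4) * w r = real (Suc (m+4)) * r^(m+4) * (w r / (real m + 5))"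
      by (rule ev_pos) (simp add: field_simps)
    show "((\<lambda>r. w r / (real m + 5)) \<longlongrightarrow> L / (real m + 5)) at_top"
      by (intro tendsto_intros L) auto
  qed
  have S6b: "((\<lambda>r. v1 r / r / 2) \<longlongrightarrow> L / (real m + 5) / 2) at_top"
  proof -
    have "((\<lambda>r. v1 r / r) \<longlongrightarrow> L / (real m + 5)) at_top"
      by (rule Lim_transform_eventually[OF S6a]) (rule ev_pos, simp add: V_def numeral_eq_Suc)
    from tendsto_divide[OF this tendsto_const[of 2]] show ?thesis by simp
  qed
  have S6c: "((\<lambda>r. v r / r^Suc 1) \<longlongrightarrow> L / (real m + 5) / 2) at_top"
  proof (rule lh_pow[where D = v1 and G = "\<lambda>r. v1 r / r / 2", OF _ _ S6b])
    show "\<forall>\<^sub>F r in at_top. DERIV v r :> v1 r" by (rule ev_pos) (rule dv)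
    show "\<forall>\<^sub>F r in at_top. v1 r = real (Suc 1) * r^1 * (v1 r / r / 2)"
      by (rule ev_pos) simp
  qed
  have S6d: "((\<lambda>r. v r / r^Suc 1) \<longlongrightarrow> 0) at_top"
    by (intro tendsto_divide_0[OF S2] filterlim_at_top_imp_at_infinity
              filterlim_pow_at_top[OF _ filterlim_ident]) auto
  have "L / (real m + 5) / 2 = 0" using tendsto_unique[OF _ S6c S6d] by simp
  then have L0: "L = 0" by simp
  have S7: "((\<lambda>r. r^Suc 2 * w r) \<longlongrightarrow> - K / real (Suc 2)) at_top"
  proof (rule lh_inv[where D = w1 and G = "\<lambda>r. W r / r^m", OF _ _ _ K])
    show "(w \<longlongrightarrow> 0) at_top" using L L0 by simp
    show "\<forall>\<^sub>F r in at_top. DERIV w r :> w1 r" by (rule ev_pos) (rule dw)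
    show "\<forall>\<^sub>F r in at_top. w1 r = W r / r^m / r^Suc (Suc 2)"
      by (rule ev_pos) (simp add: w1W numeral_eq_Suc)
  qed
  define I where "I = - K / 3 / (real m + 2)"
  have S8: "((\<lambda>r. r^2 * v1 r) \<longlongrightarrow> I) at_top"
  proof -
    have "((\<lambda>r. V r / r^Suc (m+1)) \<longlongrightarrow> I) at_top"
    proof (rule lh_pow[where D = "\<lambda>r. r^(m+4) * w r" and G = "\<lambda>r. r^Suc 2 * w r / (real m + 2)"])
      show "\<forall>\<^sub>F r in at_top. DERIV V r :> r^(m+4) * w r" by (rule ev_pos) (rule dV)
      show "\<forall>\<^sub>F r in at_top. r^(m+4) * w r = real (Suc (m+1)) * r^(m+1) * (r^Suc 2 * w r / (real m + 2))"
        by (rule ev_pos) (simp add: field_simps power_add numeral_eq_Suc)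
      show "((\<lambda>r. r^Suc 2 * w r / (real m + 2)) \<longlongrightarrow> I) at_top"
        unfolding I_def using tendsto_divide[OF S7 tendsto_const[of "real m + 2"]] by simp
    qed
    then show ?thesis
      by (rule Lim_transform_eventually) (rule ev_pos, simp add: V_def power_add numeral_eq_Suc)
  qed
  have S9: "((\<lambda>r. r^Suc 0 * v r) \<longlongrightarrow> - I / real (Suc 0)) at_top"
  proof (rule lh_inv[where D = v1 and G = "\<lambda>r. r^2 * v1 r", OF S2 _ _ S8])
    show "\<forall>\<^sub>F r in at_top. DERIV v r :> v1 r" by (rule ev_pos) (rule dv)
    show "\<forall>\<^sub>F r in at_top. v1 r = r^2 * v1 r / r^Suc (Suc 0)"
      by (rule ev_pos) (simp add: power2_eq_square)
  qed
  define Fd where "Fd r = r^(m+4) * f1 r" for r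
  have dFd: "DERIV Fd r :> r^(m+4) * v r" if "r > 0" for r
    unfolding Fd_def using dgen[where h=f1 and h'=f2, OF that df1[OF that]] ev[OF that] by simp
  have S10: "((\<lambda>r. Fd r / r^Suc (m+3)) \<longlongrightarrow> - I / (real m + 4)) at_top"
  proof (rule lh_pow[where D = "\<lambda>r. r^(m+4) * v r" and G = "\<lambda>r. r^Suc 0 * v r / (real m + 4)"])
    show "\<forall>\<^sub>F r in at_top. DERIV Fd r :> r^(m+4) * v r" by (rule ev_pos) (rule dFd)
    show "\<forall>\<^sub>F r in at_top. r^(m+4) * v r = real (Suc (m+3)) * r^(m+3) * (r^Suc 0 * v r / (real m + 4))"
      by (rule ev_pos) (simp add: field_simps power_add numeral_eq_Suc)
    show "((\<lambda>r. r^Suc 0 * v r / (real m + 4)) \<longlongrightarrow> - I / (real m + 4)) at_top"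
      using tendsto_divide[OF S9 tendsto_const[of "real m + 4"]] by simp
  qed
  have S10': "(f1 \<longlongrightarrow> - I / (real m + 4)) at_top"
    by (rule Lim_transform_eventually[OF S10]) (rule ev_pos, simp add: Fd_def numeral_eq_Suc)
  have S11: "((\<lambda>r. f r / r^Suc 0) \<longlongrightarrow> - I / (real m + 4)) at_top"
  proof (rule lh_pow[where D = f1 and G = f1, OF _ _ S10'])
    show "\<forall>\<^sub>F r in at_top. DERIV f r :> f1 r" by (rule ev_pos) (rule df)
    show "\<forall>\<^sub>F r in at_top. f1 r = real (Suc 0) * r^0 * f1 r" by simp
  qed
  show ?thesis using S8 S11 by auto
qed



lemma lap_radial:
  fixes G :: "'a::euclidean_space \<Rightarrow> real" and h h1 h2 :: "real \<Rightarrow> real"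
  assumes G: "\<And>y. y \<noteq> 0 \<Longrightarrow> G y = h (norm y)"
    and d1: "\<And>r. r > 0 \<Longrightarrow> DERIV h r :> h1 r"
    and d2: "\<And>r. r > 0 \<Longrightarrow> DERIV h1 r :> h2 r"
    and x: "x \<noteq> 0"
  shows "laplacian G x = h2 (norm x) + (real DIM('a) - 1) * h1 (norm x) / norm x"
proof -
  have opn: "open (- {0::'a})" by auto
  have gd: "(G has_derivative (\<lambda>z. inner z (h1 (norm y) *\<^sub>R sgn y))) (at y)" if "y \<noteq> 0" for y
  proof -
    have "GDERIV (\<lambda>y. h (norm y)) y :> h1 (norm y) *\<^sub>R sgn y"
      by (rule GDERIV_DERIV_compose[OF GDERIV_norm[OF that] d1]) (use that in simp)
    then have "((\<lambda>y. h (norm y)) has_derivative (\<lambda>z. inner z (h1 (norm y) *\<^sub>R sgn y))) (at y)"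
      by (simp add: gderiv_def)
    then show ?thesis
      by (rule has_derivative_transform_within_open[OF _ opn]) (use that G in auto)
  qed
  define \<phi> where "\<phi> t = h1 t / t" for t
  define \<phi>' where "\<phi>' t = h2 t / t - h1 t / t^2" for t
  have dphi: "DERIV \<phi> t :> \<phi>' t" if "t > 0" for t
  proof -
    have "DERIV \<phi> t :> (h2 t * t - h1 t * 1) / (t * t)"
      unfolding \<phi>_def by (rule DERIV_divide[OF d2[OF that] DERIV_ident]) (use that in simp)
    moreover have "(h2 t * t - h1 t * 1) / (t * t) = \<phi>' t"
      unfolding \<phi>'_def using that by (simp add: diff_divide_distrib power2_eq_square)
    ultimately show ?thesis by simp
  qed
  have pG: "partial G i y = \<phi> (norm y) * inner y i" if "y \<noteq> 0" for i y
  proof -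
    have "frechet_derivative G (at y) = (\<lambda>z. inner z (h1 (norm y) *\<^sub>R sgn y))"
      using frechet_derivative_at[OF gd[OF that]] by simp
    then show ?thesis
      unfolding partial_def \<phi>_def using that
      by (simp add: sgn_div_norm inner_commute divide_inverse)
  qed
  have ppG: "partial (partial G i) i x = \<phi> (norm x) + \<phi>' (norm x) * (inner x i)^2 / norm x"
    if i: "i \<in> Basis" for i
  proof -
    have g1: "GDERIV (\<lambda>y. \<phi> (norm y)) x :> \<phi>' (norm x) *\<^sub>R sgn x"
      by (rule GDERIV_DERIV_compose[OF GDERIV_norm[OF x] dphi]) (use x in simp)
    have g2: "GDERIV (\<lambda>y. inner y i) x :> i"
      unfolding gderiv_def by (rule has_derivative_inner_left[OF has_derivative_ident])
    have "GDERIV (\<lambda>y. \<phi> (norm y) * inner y i) x :> \<phi> (norm x) *\<^sub>R i + inner x i *\<^sub>R (\<phi>' (norm x) *\<^sub>R sgn x)"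
      by (rule GDERIV_mult[OF g1 g2])
    then have "((\<lambda>y. \<phi> (norm y) * inner y i) has_derivative
        (\<lambda>z. inner z (\<phi> (norm x) *\<^sub>R i + inner x i *\<^sub>R (\<phi>' (norm x) *\<^sub>R sgn x)))) (at x)"
      by (simp add: gderiv_def)
    then have "(partial G i has_derivative
        (\<lambda>z. inner z (\<phi> (norm x) *\<^sub>R i + inner x i *\<^sub>R (\<phi>' (norm x) *\<^sub>R sgn x)))) (at x)"
      by (rule has_derivative_transform_within_open[OF _ opn]) (use x pG in auto)
    then have fd: "frechet_derivative (partial G i) (at x) = (\<lambda>z. inner z (\<phi> (norm x) *\<^sub>R i + inner x i *\<^sub>R (\<phi>' (norm x) *\<^sub>R sgn x)))"
      using frechet_derivative_at by metis
    have "partial (partial G i) i x = inner i (\<phi> (norm x) *\<^sub>R i + inner x i *\<^sub>R (\<phi>' (norm x) *\<^sub>R sgn x))"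
      unfolding partial_def[of "partial G i"] fd by (simp add: inner_commute)
    also have "\<dots> = \<phi> (norm x) + \<phi>' (norm x) * (inner x i)^2 / norm x"
      using i by (simp add: inner_add_right sgn_div_norm inner_commute power2_eq_square divide_inverse)
    finally show ?thesis .
  qed
  have sq: "(\<Sum>i\<in>Basis. (inner x i)^2) = (norm x)^2"
    using euclidean_inner[of x x] power2_norm_eq_inner[of x] by (simp add: power2_eq_square)
  have "laplacian G x = (\<Sum>i\<in>Basis. \<phi> (norm x) + \<phi>' (norm x) * (inner x i)^2 / norm x)"
    unfolding laplacian_def using ppG by simp
  also have "\<dots> = real DIM('a) * \<phi> (norm x) + \<phi>' (norm x) / norm x * (\<Sum>i\<in>Basis. (inner x i)^2)"
    by (simp add: sum.distrib sum_distrib_left sum_divide_distrib)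
  also have "\<dots> = h2 (norm x) + (real DIM('a) - 1) * h1 (norm x) / norm x"
    unfolding sq \<phi>_def \<phi>'_def using x by (simp add: field_simps power2_eq_square)
  finally show ?thesis .
qed


fun Dit :: "'a \<Rightarrow> nat \<Rightarrow> ('a::euclidean_space \<Rightarrow> real) \<Rightarrow> 'a \<Rightarrow> real" where
  "Dit e 0 g = g"
| "Dit e (Suc k) g = (\<lambda>x. frechet_derivative (Dit e k g) (at x) e)"

lemma Ck_Dit: "e \<in> Basis \<Longrightarrow> Ck (k + m) g \<Longrightarrow> Ck m (Dit e k g)"
proof (induction k arbitrary: m)
  case 0 then show ?case by simp
next
  case (Suc k)
  have "Ck (Suc m) (Dit e k g)" using Suc.IH[of "Suc m"] Suc.prems by simp
  then show ?case using Suc.prems(1) by simp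
qed

lemma Ck_line_deriv:
  assumes "Ck (Suc m) G"
  shows "DERIV (\<lambda>r. G (r *\<^sub>R e)) r :> frechet_derivative G (at (r *\<^sub>R e)) e"
proof -
  have "G differentiable (at (r *\<^sub>R e))"
    using assms by (auto simp: differentiable_on_def)
  then have gd: "(G has_derivative frechet_derivative G (at (r *\<^sub>R e))) (at (r *\<^sub>R e))"
    by (rule frechet_derivative_works[THEN iffD1])
  have ld: "((\<lambda>r. r *\<^sub>R e) has_derivative (\<lambda>t. t *\<^sub>R e)) (at r)"
    by (rule derivative_eq_intros refl)+ simp
  have "((\<lambda>r. G (r *\<^sub>R e)) has_derivative (\<lambda>t. frechet_derivative G (at (r *\<^sub>R e)) (t *\<^sub>R e))) (at r)"
    using has_derivative_compose[OF ld gd] by simp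
  moreover have "(\<lambda>t. frechet_derivative G (at (r *\<^sub>R e)) (t *\<^sub>R e)) = (*) (frechet_derivative G (at (r *\<^sub>R e)) e)"
  proof
    fix t
    have "linear (frechet_derivative G (at (r *\<^sub>R e)))"
      using has_derivative_linear[OF gd] .
    then show "frechet_derivative G (at (r *\<^sub>R e)) (t *\<^sub>R e) = frechet_derivative G (at (r *\<^sub>R e)) e * t"
      by (simp add: linear_scale mult.commute)
  qed
  ultimately show ?thesis by (simp add: has_field_derivative_def)
qed

lemma rho_lemma:
  fixes f f1 f2 :: "real \<Rightarrow> real"
  assumes df: "\<And>r. r > 0 \<Longrightarrow> (f has_real_derivative f1 r) (at r)"
    and df1: "\<And>r. r > 0 \<Longrightarrow> (f1 has_real_derivative f2 r) (at r)"
    and lim: "(f2 \<longlongrightarrow> \<rho>) at_top"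
  shows "((\<lambda>r. f r / r^2) \<longlongrightarrow> \<rho> / 2) at_top"
proof -
  have a: "((\<lambda>r. f1 r / r^Suc 0) \<longlongrightarrow> \<rho>) at_top"
  proof (rule lh_pow[where D = f2 and G = f2, OF _ _ lim])
    show "\<forall>\<^sub>F r in at_top. DERIV f1 r :> f2 r" by (rule ev_pos) (rule df1)
  qed simp
  have b: "((\<lambda>r. f1 r / r / 2) \<longlongrightarrow> \<rho> / 2) at_top"
    using tendsto_divide[OF a tendsto_const[of 2]] by simp
  have "((\<lambda>r. f r / r^Suc 1) \<longlongrightarrow> \<rho> / 2) at_top"
  proof (rule lh_pow[where D = f1 and G = "\<lambda>r. f1 r / r / 2", OF _ _ b])
    show "\<forall>\<^sub>F r in at_top. DERIV f r :> f1 r" by (rule ev_pos) (rule df)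
    show "\<forall>\<^sub>F r in at_top. f1 r = real (Suc 1) * r^1 * (f1 r / r / 2)" by (rule ev_pos) simp
  qed
  then show ?thesis by (simp add: numeral_eq_Suc)
qed

lemma radial_lap_eq:
  assumes n: "n \<ge> 2"
    and d1: "\<And>s. s > 0 \<Longrightarrow> DERIV h s :> h1 s"
    and d2: "\<And>s. s > 0 \<Longrightarrow> DERIV h1 s :> h2 s"
    and r: "r > 0"
  shows "radial_lap n h r = h2 r + (real n - 1) * h1 r / r"
proof -
  obtain j where nj: "n = Suc (Suc j)" using n by (metis add_2_eq_Suc le_iff_add add.commute)
  have dd: "DERIV (\<lambda>s. s^Suc j * h1 s) r :> real (Suc j) * r^j * h1 r + r^Suc j * h2 r"
  proof -
    have "DERIV (\<lambda>s. s^Suc j * h1 s) r :> real (Suc j) * r^(Suc j - Suc 0) * h1 r + r^Suc j * h2 r"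
      by (rule DERIV_mult'[OF DERIV_pow d2[OF r], THEN DERIV_cong]) simp
    then show ?thesis by simp
  qed
  have "DERIV (\<lambda>s. s^(n-1) * deriv h s) r :> real (Suc j) * r^j * h1 r + r^Suc j * h2 r"
  proof (rule has_field_derivative_transform_within_open[OF dd, of "{0<..}"])
    fix s :: real assume "s \<in> {0<..}"
    then show "s^Suc j * h1 s = s^(n-1) * deriv h s"
      using DERIV_imp_deriv[OF d1, of s] nj by simp
  qed (use r in auto)
  then have dv: "deriv (\<lambda>s. s^(n-1) * deriv h s) r = real (Suc j) * r^j * h1 r + r^Suc j * h2 r"
    by (rule DERIV_imp_deriv)
  have "r powr (1 - real n) * r^Suc j = 1"
    using pow_powr[of r "Suc j" "1 - real n"] r nj by (simp add: mult.commute)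
  then have P: "r powr (1 - real n) = 1 / r^Suc j" using r by (simp add: field_simps)
  have "radial_lap n h r = (real (Suc j) * r^j * h1 r + r^Suc j * h2 r) / r^Suc j"
    unfolding radial_lap_def P dv by simp
  also have "\<dots> = h2 r + (real n - 1) * h1 r / r"
    using r nj by (simp add: field_simps)
  finally show ?thesis .
qed


fun sm :: "nat \<Rightarrow> (real \<Rightarrow> real) \<Rightarrow> bool" where
  "sm 0 h = True"
| "sm (Suc k) h = (\<exists>h'. (\<forall>r>0. DERIV h r :> h' r) \<and> sm k h')"

lemma sm_mono: "sm (Suc k) h \<Longrightarrow> sm k h"
proof (induction k arbitrary: h)
  case 0 then show ?case by simp
next
  case (Suc k)
  then obtain h' where "\<forall>r>0. DERIV h r :> h' r" "sm (Suc k) h'" by auto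
  then show ?case using Suc.IH by auto
qed

lemma sm_const: "sm k (\<lambda>r. c)"
proof (induction k arbitrary: c)
  case (Suc k)
  then show ?case by (auto intro!: exI[of _ "\<lambda>r. 0"])
qed simp

lemma sm_add: "sm k f \<Longrightarrow> sm k g \<Longrightarrow> sm k (\<lambda>r. f r + g r)"
proof (induction k arbitrary: f g)
  case (Suc k)
  then obtain f' g' where "\<forall>r>0. DERIV f r :> f' r" "sm k f'" "\<forall>r>0. DERIV g r :> g' r" "sm k g'"
    by auto
  then show ?case using Suc.IH[of f' g'] by (auto intro!: exI[of _ "\<lambda>r. f' r + g' r"] DERIV_add)
qed simp

lemma sm_mult: "sm k f \<Longrightarrow> sm k g \<Longrightarrow> sm k (\<lambda>r. f r * g r)"
proof (induction k arbitrary: f g)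
  case (Suc k)
  then obtain f' g' where d: "\<forall>r>0. DERIV f r :> f' r" "sm k f'" "\<forall>r>0. DERIV g r :> g' r" "sm k g'"
    by auto
  have "sm k (\<lambda>r. f r * g' r + f' r * g r)"
    using Suc.IH[of f' g] Suc.IH[of f g'] d sm_mono[OF Suc.prems(1)] sm_mono[OF Suc.prems(2)]
    by (intro sm_add) auto
  moreover have "\<forall>r>0. DERIV (\<lambda>r. f r * g r) r :> f r * g' r + f' r * g r"
    using d by (auto intro!: DERIV_mult')
  ultimately show ?case by auto
qed simp

lemma sm_inv: "sm k (\<lambda>r. 1 / r)"
proof (induction k)
  case (Suc k)
  have "sm k (\<lambda>r. (- 1) * ((1 / r) * (1 / r)))"
    by (intro sm_mult sm_const Suc.IH)
  moreover have "\<forall>r>0. DERIV (\<lambda>r::real. 1 / r) r :> (- 1) * ((1 / r) * (1 / r))"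
  proof (intro allI impI)
    fix r :: real assume "r > 0"
    then show "DERIV (\<lambda>r::real. 1 / r) r :> (- 1) * ((1 / r) * (1 / r))"
      using DERIV_divide[OF DERIV_const[of 1] DERIV_ident, of r] by simp
  qed
  ultimately show ?case by auto
qed simp

lemma sm_chain:
  assumes "\<And>j r. j < N \<Longrightarrow> DERIV (F j) r :> F (Suc j) r"
  shows "j + k \<le> N \<Longrightarrow> sm k (F j)"
proof (induction k arbitrary: j)
  case (Suc k)
  have "sm k (F (Suc j))" using Suc by simp
  moreover have "\<forall>r>0. DERIV (F j) r :> F (Suc j) r" using assms Suc.prems by simp
  ultimately show ?case by auto
qed simp


lemma integral_part:
  fixes g Z :: "real \<Rightarrow> real"
  assumes dZ: "\<And>t. t > 0 \<Longrightarrow> (Z has_real_derivative g t) (at t)"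
    and Z0: "(Z \<longlongrightarrow> 0) (at_right 0)" and Zz: "Z 0 = 0"
    and lim: "(Z \<longlongrightarrow> I) at_top"
  shows "(g has_integral I) {0..}"
proof -
  have fin: "(g has_integral Z b) {0..b}" if b: "b > 0" for b
  proof -
    have "continuous_on {0..b} Z"
    proof (clarsimp simp: continuous_on_eq_continuous_within)
      fix t assume t: "0 \<le> t" "t \<le> b"
      show "continuous (at t within {0..b}) Z"
      proof (cases "t = 0")
        case True
        then show ?thesis
          unfolding continuous_within using at_within_Icc_at_right[OF b] Z0 Zz by simp
      next
        case False
        then have "isCont Z t" using dZ[of t] t by (intro DERIV_isCont) auto
        then show ?thesis by (rule continuous_at_imp_continuous_at_within)
      qed
    qed
    moreover have "(Z has_vector_derivative g t) (at t)" if "t \<in> {0<..<b}" for t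
      using dZ[of t] that by (simp add: has_real_derivative_iff_has_vector_derivative)
    ultimately show ?thesis
      using fundamental_theorem_of_calculus_interior[of 0 b Z g] b Zz by auto
  qed
  have nb: "\<not> (\<exists>a b. {0::real..} = cbox a b)"
  proof
    assume "\<exists>a b. {0::real..} = cbox a b"
    then obtain a b :: real where eq: "{0..} = cbox a b" by blast
    have "max (b+1) 0 \<in> {0::real..}" by simp
    then have "max (b+1) 0 \<in> cbox a b" using eq by simp
    then show False by simp
  qed
  show ?thesis
  proof (subst has_integral_alt, simp only: nb if_False, intro allI impI)
    fix e :: real assume e: "e > 0"
    obtain B0 where B0: "\<And>b. b \<ge> B0 \<Longrightarrow> \<bar>Z b - I\<bar> < e"
      using tendstoD[OF lim e] unfolding eventually_at_top_linorder dist_real_def by auto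
    define B where "B = 2 * max B0 1"
    show "\<exists>B>0. \<forall>a b. ball 0 B \<subseteq> cbox a b \<longrightarrow>
      (\<exists>z. ((\<lambda>x. if x \<in> {0..} then g x else 0) has_integral z) (cbox a b) \<and> norm (z - I) < e)"
    proof (intro exI conjI allI impI)
      show "B > 0" unfolding B_def by simp
      fix a b :: real assume sub: "ball 0 B \<subseteq> cbox a b"
      have "B / 2 \<in> ball 0 B" "- B / 2 \<in> ball 0 B" unfolding B_def by auto
      then have "B / 2 \<in> cbox a b" "- B / 2 \<in> cbox a b" using sub by blast+
      then have ab: "B / 2 \<le> b" "a \<le> - B / 2" by auto
      then have bB: "b \<ge> B0" "b > 0" "a \<le> 0" unfolding B_def by auto
      have "((\<lambda>x. if x \<in> cbox 0 b then g x else 0) has_integral Z b) (cbox a b)"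
        by (rule has_integral_restrict_closed_subinterval) (use fin[OF bB(2)] bB in auto)
      then show "((\<lambda>x. if x \<in> {0..} then g x else 0) has_integral Z b) (cbox a b)"
        by (rule has_integral_eq[rotated]) auto
      show "norm (Z b - I) < e" using B0[OF bB(1)] by simp
    qed
  qed
qed


theorem mainTheorem8:
  fixes u :: "'a::euclidean_space \<Rightarrow> real" and q \<rho> :: real
  assumes dim: "DIM('a) \<ge> 5"
    and q: "q > 5"
    and reg: "Ck 6 u"
    and pos: "\<And>x. u x > 0"
    and radial: "\<And>x y. norm x = norm y \<Longrightarrow> u x = u y"
    and eqn: "\<And>x. laplacian (laplacian (laplacian u)) x = u x powr (- q)"
    and growth: "Liminf at_infinity (\<lambda>x. ereal (u x / norm x)) > 0"
    and rho: "((\<lambda>r. deriv (deriv (radial_profile u)) r) \<longlongrightarrow> \<rho>) at_top"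
  shows "\<rho> \<ge> 0
    \<and> (\<rho> > 0 \<longrightarrow> ((\<lambda>x. u x / (norm x)\<^sup>2) \<longlongrightarrow> \<rho> / 2) at_infinity)
    \<and> (\<rho> = 0 \<longrightarrow>
        (let n = DIM('a); ub = radial_profile u;
             g = (\<lambda>t. t\<^sup>2 * (radial_lap n (radial_lap n ub) t
                   - (real n - 3) / t * deriv (radial_lap n ub) t))
         in \<exists>I. (g has_integral I) {0..}
              \<and> ((\<lambda>x. u x / norm x) \<longlongrightarrow> - I / (real n - 1)) at_infinity
              \<and> 0 < - I / (real n - 1)))"
proof -
  define e :: 'a where "e = (SOME b. b \<in> Basis)"
  have eB: "e \<in> Basis" unfolding e_def by (rule someI_ex) (use nonempty_Basis in blast)
  have ne: "norm e = 1" using eB by simp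
  define F where "F j r = Dit e j u (r *\<^sub>R e)" for j r
  have dF: "DERIV (F j) r :> F (Suc j) r" if "j < 6" for j r
  proof -
    have "Ck (Suc (5 - j)) (Dit e j u)"
      using Ck_Dit[OF eB, of j "Suc (5 - j)" u] reg that by simp
    from Ck_line_deriv[OF this, of e r] show ?thesis unfolding F_def by simp
  qed
  have dF0: "DERIV (F 0) r :> F 1 r" and dF1': "DERIV (F 1) r :> F 2 r" and dF2: "DERIV (F 2) r :> F 3 r"
    and dF3: "DERIV (F 3) r :> F 4 r" for r
    using dF[of 0 r] dF[of 1 r] dF[of 2 r] dF[of 3 r] by (simp_all add: numeral_eq_Suc)
  have ub: "radial_profile u = F 0" unfolding F_def radial_profile_def e_def by auto
  have uF: "u y = F 0 (norm y)" for y
    unfolding F_def using radial[of y "norm y *\<^sub>R e"] ne by simp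
  have Fpos: "F 0 r > 0" for r using pos unfolding F_def by simp
  have dub: "deriv (radial_profile u) = F 1"
    unfolding ub using DERIV_imp_deriv[OF dF[of 0]] by auto
  have dF1: "deriv (F 1) = F 2" using DERIV_imp_deriv[OF dF[of 1]] by (auto simp: numeral_2_eq_2)
  have F2lim: "(F 2 \<longlongrightarrow> \<rho>) at_top" using rho unfolding dub dF1 by simp
  have rl: "((\<lambda>r. F 0 r / r^2) \<longlongrightarrow> \<rho> / 2) at_top"
    by (rule rho_lemma[OF dF0 dF1' F2lim])
  have rho0: "\<rho> \<ge> 0"
  proof -
    have "0 \<le> \<rho> / 2"
      by (rule tendsto_lowerbound[OF rl]) (use Fpos in \<open>auto intro!: ev_pos less_imp_le\<close>)
    then show ?thesis by simp
  qed
  have comp: "((\<lambda>x. \<phi> (norm x)) \<longlongrightarrow> l) at_infinity" if "(\<phi> \<longlongrightarrow> l) at_top" for \<phi> :: "real \<Rightarrow> real" and l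
    by (rule filterlim_compose[OF that filterlim_norm_at_top])
  have part2: "((\<lambda>x. u x / (norm x)\<^sup>2) \<longlongrightarrow> \<rho> / 2) at_infinity"
    using comp[OF rl] by (simp add: uF)
  have part3: "\<exists>I. ((\<lambda>t. t\<^sup>2 * (radial_lap DIM('a) (radial_lap DIM('a) (radial_profile u)) t
                   - (real DIM('a) - 3) / t * deriv (radial_lap DIM('a) (radial_profile u)) t)) has_integral I) {0..}
              \<and> ((\<lambda>x. u x / norm x) \<longlongrightarrow> - I / (real DIM('a) - 1)) at_infinity
              \<and> 0 < - I / (real DIM('a) - 1)" if r0: "\<rho> = 0"
  proof -
    obtain m where nm: "DIM('a) = m + 5" using dim by (metis add.commute le_iff_add)
    define a where "a = real m + 4"
    have an: "real DIM('a) - 1 = a" unfolding a_def nm by simp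
    have n2: "DIM('a) \<ge> 2" using dim by simp
    define v where "v r = F 2 r + a * (F 1 r * (1 / r))" for r
    have smF: "sm k (F j)" if "j + k \<le> 6" for j k
      by (rule sm_chain[of 6 F, OF dF that]) 
    have "sm 4 v"
      unfolding v_def by (intro sm_add sm_mult sm_const sm_inv smF) simp_all
    then obtain v1 where dv: "\<And>r. r > 0 \<Longrightarrow> DERIV v r :> v1 r" and smv1: "sm 3 v1"
      by (auto simp: numeral_eq_Suc)
    then obtain v2 where dv1: "\<And>r. r > 0 \<Longrightarrow> DERIV v1 r :> v2 r" and smv2: "sm 2 v2"
      by (auto simp: numeral_eq_Suc)
    define w where "w r = v2 r + a * (v1 r * (1 / r))" for r
    have "sm 2 w"
      unfolding w_def using sm_mono[of 2 v1] smv1 smv2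
      by (intro sm_add sm_mult sm_const sm_inv) (simp_all add: numeral_eq_Suc)
    then obtain w1 w2 where dw: "\<And>r. r > 0 \<Longrightarrow> DERIV w r :> w1 r"
      and dw1: "\<And>r. r > 0 \<Longrightarrow> DERIV w1 r :> w2 r"
      by (auto simp: numeral_eq_Suc)
    have L1: "laplacian u y = v (norm y)" if "y \<noteq> 0" for y
      using lap_radial[of u "F 0" "F 1" "F 2" y] uF dF0 dF1' that
      by (simp add: v_def an)
    have L2: "laplacian (laplacian u) y = w (norm y)" if "y \<noteq> 0" for y
      using lap_radial[of "laplacian u" v v1 v2 y] L1 dv dv1 that
      by (simp add: w_def an)
    have L3: "laplacian (laplacian (laplacian u)) y = w2 (norm y) + a * w1 (norm y) / norm y"
      if "y \<noteq> 0" for y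
      using lap_radial[of "laplacian (laplacian u)" w w1 w2 y] L2 dw dw1 that
      by (simp add: an)
    have eq: "w2 r + (real m + 4) * w1 r / r = F 0 r powr (- q)" if "r > 0" for r
    proof -
      have "r *\<^sub>R e \<noteq> 0" "norm (r *\<^sub>R e) = r" using that ne eB by auto
      then show ?thesis
        using L3[of "r *\<^sub>R e"] eqn[of "r *\<^sub>R e"] uF[of "r *\<^sub>R e"] a_def by simp
    qed
    obtain c R0 where c: "c > 0" and R0: "R0 > 0" and grow: "\<And>r. r \<ge> R0 \<Longrightarrow> c * r \<le> F 0 r"
    proof -
      obtain c0 where c0: "0 < ereal c0" "ereal c0 < Liminf at_infinity (\<lambda>x. ereal (u x / norm x))"
        using ereal_dense2[OF growth] by blast
      have "eventually (\<lambda>x. ereal (c0 / 2) < ereal (u x / norm x)) at_infinity"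
      proof -
        have le: "ereal c0 \<le> Liminf at_infinity (\<lambda>x. ereal (u x / norm x))" using c0(2) by (rule less_imp_le)
        have "ereal (c0 / 2) < ereal c0" using c0(1) by simp
        then show ?thesis using le_Liminf_iff[THEN iffD1, OF le] by blast
      qed
      then obtain B where B: "\<And>x. B \<le> norm x \<Longrightarrow> c0 / 2 < u x / norm x"
        unfolding eventually_at_infinity by auto
      show ?thesis
      proof (rule that[of "c0 / 2" "max B 1"])
        show "c0 / 2 > 0" "max B 1 > 0" using c0 by auto
        fix r assume r: "max B 1 \<le> r"
        have nr: "norm (r *\<^sub>R e) = r" using r ne by simp
        then have "c0 / 2 < u (r *\<^sub>R e) / r" using B[of "r *\<^sub>R e"] r by simp
        then show "c0 / 2 * r \<le> F 0 r" using r uF[of "r *\<^sub>R e"] nr by (simp add: field_simps)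
      qed
    qed
    have ev: "v r = F 2 r + (real m + 4) * F 1 r / r" if "r > 0" for r
      unfolding v_def a_def by simp
    have ew: "w r = v2 r + (real m + 4) * v1 r / r" if "r > 0" for r
      unfolding w_def a_def by simp
    obtain I where I1: "((\<lambda>r. r^2 * v1 r) \<longlongrightarrow> I) at_top"
      and I2: "((\<lambda>r. F 0 r / r) \<longlongrightarrow> - I / (real m + 4)) at_top"
      using ode_main[OF q c R0 dF0 dF1' dv dv1 dw dw1 ev ew eq grow] F2lim r0 by blast
    define G where "G t = t\<^sup>2 * (radial_lap DIM('a) (radial_lap DIM('a) (radial_profile u)) t
                   - (real DIM('a) - 3) / t * deriv (radial_lap DIM('a) (radial_profile u)) t)" for t
    have rl1: "radial_lap DIM('a) (radial_profile u) t = v t" if "t > 0" for t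
      unfolding ub using radial_lap_eq[OF n2 dF0 dF1' that] by (simp add: v_def an)
    have drl: "DERIV (radial_lap DIM('a) (radial_profile u)) t :> v1 t" if "t > 0" for t
      by (rule has_field_derivative_transform_within_open[OF dv[OF that], of "{0<..}"])
         (use that rl1 in auto)
    have rl2: "radial_lap DIM('a) (radial_lap DIM('a) (radial_profile u)) t = v2 t + a * v1 t / t"
      if "t > 0" for t
      using radial_lap_eq[OF n2 drl dv1 that] an by simp
    have Gt: "G t = 2 * t * v1 t + t^2 * v2 t" if "t > 0" for t
    proof -
      have "real DIM('a) - 3 = a - 2" using an by simp
      then show ?thesis unfolding G_def rl2[OF that] DERIV_imp_deriv[OF drl[OF that]]
        using that by (simp add: field_simps power2_eq_square)
    qed
    define Z where "Z t = t^2 * v1 t" for t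
    have dZ: "DERIV Z t :> G t" if "t > 0" for t
    proof -
      have "DERIV (\<lambda>t. t^2 * v1 t) t :> t^2 * v2 t + real 2 * t^(2 - Suc 0) * v1 t"
        by (rule DERIV_mult'[OF DERIV_pow dv1[OF that]])
      then show ?thesis unfolding Z_def using Gt[OF that] by (simp add: algebra_simps)
    qed
    have even: "F 0 (- r) = F 0 r" for r
      unfolding F_def using radial[of "(- r) *\<^sub>R e" "r *\<^sub>R e"] by simp
    have F10: "F 1 0 = 0"
    proof -
      have "DERIV (F 0) (- 0) :> F 1 0" using dF0[of 0] by simp
      from DERIV_mirror[THEN iffD1, OF this] have "DERIV (\<lambda>r. F 0 (- r)) 0 :> - F 1 0" .
      then have "DERIV (F 0) 0 :> - F 1 0" using even by simp
      from DERIV_unique[OF dF0 this] show ?thesis by simp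
    qed
    have v1e: "v1 t = F 3 t + a * (F 1 t * ((0 * t - 1 * 1) / (t * t)) + F 2 t * (1 / t))" if "t > 0" for t
    proof -
      have "DERIV v t :> F 3 t + a * (F 1 t * ((0 * t - 1 * 1) / (t * t)) + F 2 t * (1 / t))"
        unfolding v_def
        by (intro DERIV_add DERIV_cmult DERIV_mult' dF2 dF1' DERIV_divide DERIV_const DERIV_ident)
           (use that in simp)
      from DERIV_unique[OF dv[OF that] this] show ?thesis .
    qed
    have Z0: "(Z \<longlongrightarrow> 0) (at_right 0)"
    proof -
      have c1: "isCont (F 1) 0" "isCont (F 2) 0" "isCont (F 3) 0"
        using DERIV_isCont[OF dF1'] DERIV_isCont[OF dF2] DERIV_isCont[OF dF3] by auto
      have "((\<lambda>t. t^2 * F 3 t + a * (t * F 2 t - F 1 t)) \<longlongrightarrow> 0^2 * F 3 0 + a * (0 * F 2 0 - F 1 0)) (at 0)"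
        using c1 unfolding isCont_def by (intro tendsto_intros) auto
      then have "((\<lambda>t. t^2 * F 3 t + a * (t * F 2 t - F 1 t)) \<longlongrightarrow> 0) (at_right 0)"
        using F10 filterlim_at_split by auto
      then show ?thesis
      proof (rule Lim_transform_eventually)
        show "\<forall>\<^sub>F t in at_right 0. t^2 * F 3 t + a * (t * F 2 t - F 1 t) = Z t"
          using eventually_at_right_less[of "0::real"]
          by eventually_elim (simp add: Z_def v1e field_simps power2_eq_square)
      qed
    qed
    have int: "(G has_integral I) {0..}"
    proof (rule integral_part[OF dZ Z0])
      show "Z 0 = 0" by (simp add: Z_def)
      have "Z = (\<lambda>t. t^2 * v1 t)" by (simp add: Z_def fun_eq_iff)
      then show "(Z \<longlongrightarrow> I) at_top" using I1 by simp
    qed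
    have lim: "((\<lambda>x. u x / norm x) \<longlongrightarrow> - I / (real DIM('a) - 1)) at_infinity"
      using comp[OF I2] an a_def by (simp add: uF add.commute)
    have "c \<le> - I / (real m + 4)"
    proof (rule tendsto_lowerbound[OF I2])
      show "\<forall>\<^sub>F r in at_top. c \<le> F 0 r / r"
        using eventually_ge_at_top[of R0]
        by eventually_elim (use grow R0 in \<open>simp add: field_simps\<close>)
    qed simp
    then have "0 < - I / (real DIM('a) - 1)" using c an a_def by (simp add: add.commute)
    then show ?thesis using int lim unfolding G_def by blast
  qed
  show ?thesis using rho0 part2 part3 unfolding Let_def by blast
qed

end
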